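(* Let $\mathcal{S}$ be a countably intersected family of subsets of a set $\Gamma$ and let $s_1,\dots,s_n\in\mathcal{S}$. Then there exists a pairwise disjoint family $t_1,\dots,t_l\in\mathcal{S}$ such that each $t_j$ is contained in some $s_i$ and $\bigcup_{i=1}^n s_i=\bigcup_{j=1}^l t_j$.
   Context: A family $\mathcal{S}$ of subsets of $\Gamma$ is countably intersected (C.I.) if: (a) $\mathcal{S}$ consists of countable subsets of $\Gamma$, contains all singletons, and is pointwise closed, i.e. $\{\chi_s : s\in\mathcal{S}\}$ is closed in $\{0,1\}^{\Gamma}$; (b) for all $s,t\in\mathcal{S}$, the set $s\setminus t$ is a finite union of pairwise disjoint elements of $\mathcal{S}$; (c) to every $t\in\mathcal{S}$ one can assign $s_t\in\mathcal{S}$ with $t\subseteq s_t$ such that for all $s,t_1,\dots,t_n\in\mathcal{S}$ there exists $t\in\mathcal{S}$ with $t\subseteq s\setminus\bigcup_{i=1}^n s_{t_i}$ and $s\setminus\big(\bigcup_{i=1}^n s_{t_i}\cup t\big)$ finite; (d) for every $s\in\mathcal{S}$ the set $\{s\cap t: t\in\mathcal{S}\}$ is countable. *)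

theory Defs
  imports "HOL-Analysis.Analysis"
begin

text \<open>Pointwise closedness: the set of characteristic functions (restricted to \<open>\<Gamma>\<close>)
  is closed in the product space \<open>{0,1}^\<Gamma>\<close>, with \<open>{0,1}\<close> = bool discrete.\<close>

definition countably_intersected :: "'a set \<Rightarrow> 'a set set \<Rightarrow> bool" where
  "countably_intersected \<Gamma> S \<longleftrightarrow>
     \<comment> \<open>(a)\<close>
     (\<forall>s\<in>S. s \<subseteq> \<Gamma> \<and> countable s) \<and>
     (\<forall>x\<in>\<Gamma>. {x} \<in> S) \<and>
     closedin (product_topology (\<lambda>_. discrete_topology (UNIV::bool set)) \<Gamma>)
              ((\<lambda>s. restrict (\<lambda>x. x \<in> s) \<Gamma>) ` S) \<and>
     \<comment> \<open>(b)\<close>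
     (\<forall>s\<in>S. \<forall>t\<in>S. \<exists>F. finite F \<and> F \<subseteq> S \<and> disjoint F \<and> \<Union>F = s - t) \<and>
     \<comment> \<open>(c)\<close>
     (\<exists>st :: 'a set \<Rightarrow> 'a set.
        (\<forall>t\<in>S. st t \<in> S \<and> t \<subseteq> st t) \<and>
        (\<forall>s\<in>S. \<forall>n. \<forall>ts :: nat \<Rightarrow> 'a set. (\<forall>i<n. ts i \<in> S) \<longrightarrow>
            (\<exists>t\<in>S. t \<subseteq> s - (\<Union>i<n. st (ts i)) \<and>
                    finite (s - ((\<Union>i<n. st (ts i)) \<union> t))))) \<and>
     \<comment> \<open>(d)\<close>
     (\<forall>s\<in>S. countable {s \<inter> t | t. t \<in> S})"

end

theory Submission
  imports Defs
begin

lemma ci_b0: "countably_intersected \<Gamma> S \<Longrightarrow> (\<forall>s\<in>S. \<forall>t\<in>S. \<exists>F. finite F \<and> F \<subseteq> S \<and> disjoint F \<and> \<Union>F = s - t)"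
  unfolding countably_intersected_def by (elim conjE)
lemma ci_b: assumes "countably_intersected \<Gamma> S" "s \<in> S" "t \<in> S" shows
   "\<exists>F. finite F \<and> F \<subseteq> S \<and> disjoint F \<and> \<Union>F = s - t"
  using ci_b0[OF assms(1), rule_format, OF assms(2) assms(3)] .

lemma lemA:
  assumes ci: "countably_intersected \<Gamma> S" and fin: "finite G"
  shows "G \<subseteq> S \<Longrightarrow> s \<in> S \<Longrightarrow> \<exists>F. finite F \<and> F \<subseteq> S \<and> disjoint F \<and> \<Union>F = s - \<Union>G \<and> (\<forall>f\<in>F. f \<subseteq> s)"
  using fin
proof (induction G rule: finite_induct)
  case empty
  have "disjoint {s}" by (simp add: disjoint_def)
  then show ?case using empty.prems by (intro exI[of _ "{s}"]) simp
next
  case (insert g G)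
  then obtain F where F: "finite F" "F \<subseteq> S" "disjoint F" "\<Union>F = s - \<Union>G" "\<forall>f\<in>F. f \<subseteq> s"
    by auto
  have "\<forall>f\<in>F. \<exists>H. finite H \<and> H \<subseteq> S \<and> disjoint H \<and> \<Union>H = f - g"
  proof
    fix f assume "f \<in> F"
    then have "f \<in> S" using F(2) by (rule subsetD[rotated])
    moreover have "g \<in> S" using insert.prems by simp
    ultimately show "\<exists>H. finite H \<and> H \<subseteq> S \<and> disjoint H \<and> \<Union>H = f - g" by (rule ci_b[OF ci])
  qed
  then have "\<exists>H. \<forall>f\<in>F. finite (H f) \<and> H f \<subseteq> S \<and> disjoint (H f) \<and> \<Union>(H f) = f - g"
    by (rule bchoice)
  then obtain H where H0: "\<forall>f\<in>F. finite (H f) \<and> H f \<subseteq> S \<and> disjoint (H f) \<and> \<Union>(H f) = f - g"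
    by (rule exE)
  have H: "finite (H f) \<and> H f \<subseteq> S \<and> disjoint (H f) \<and> \<Union>(H f) = f - g" if "f \<in> F" for f
    using H0 that by (rule bspec)
  show ?case
  proof (intro exI[of _ "\<Union>(H ` F)"] conjI)
    show "finite (\<Union>(H ` F))" using F H by auto
    show "\<Union>(H ` F) \<subseteq> S" using H by (meson UN_least)
    show "\<forall>f\<in>\<Union>(H ` F). f \<subseteq> s"
    proof
      fix f assume "f \<in> \<Union>(H ` F)"
      then obtain f0 where "f0 \<in> F" "f \<in> H f0" by blast
      then show "f \<subseteq> s" using H[of f0] F(5) by blast
    qed
    show "\<Union>(\<Union>(H ` F)) = s - \<Union>(insert g G)"
    proof -
      have "\<Union>(\<Union>(H ` F)) = (\<Union>f\<in>F. \<Union>(H f))" by blast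
      also have "\<dots> = (\<Union>f\<in>F. f - g)" using H by simp
      also have "\<dots> = \<Union>F - g" by blast
      finally show ?thesis using F(4) by auto
    qed
    show "disjoint (\<Union>(H ` F))"
    proof (rule disjointI)
      fix a b assume a: "a \<in> \<Union>(H ` F)" and b: "b \<in> \<Union>(H ` F)" and ne: "a \<noteq> b"
      then obtain fa fb where fa: "fa \<in> F" "a \<in> H fa" and fb: "fb \<in> F" "b \<in> H fb" by blast
      have sa: "a \<subseteq> fa" using H[OF fa(1)] fa(2) by blast
      have sb: "b \<subseteq> fb" using H[OF fb(1)] fb(2) by blast
      show "a \<inter> b = {}"
      proof (cases "fa = fb")
        case True
        then show ?thesis using H[OF fa(1)] fa fb ne by (auto dest: disjointD)
      next
        case False
        then have "fa \<inter> fb = {}" using F(3) fa fb by (auto dest: disjointD)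
        then show ?thesis using sa sb by blast
      qed
    qed
  qed
qed

lemma lemB:
  fixes n :: nat and s :: "nat \<Rightarrow> 'a set"
  assumes ci: "countably_intersected \<Gamma> S"
  shows "\<forall>i<n. s i \<in> S \<Longrightarrow> \<exists>F. finite F \<and> F \<subseteq> S \<and> disjoint F \<and> \<Union>F = (\<Union>i<n. s i) \<and> (\<forall>f\<in>F. \<exists>i<n. f \<subseteq> s i)"
proof (induction n)
  case 0
  then show ?case by (intro exI[of _ "{}"]) auto
next
  case (Suc n)
  have pn: "\<forall>i<n. s i \<in> S" using Suc.prems by simp
  obtain F where F: "finite F" "F \<subseteq> S" "disjoint F" "\<Union>F = (\<Union>i<n. s i)" "\<forall>f\<in>F. \<exists>i<n. f \<subseteq> s i"
    using Suc.IH[OF pn] by (elim exE conjE) (rule that; assumption)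
  have sn: "s n \<in> S" using Suc.prems by simp
  obtain F' where F': "finite F'" "F' \<subseteq> S" "disjoint F'" "\<Union>F' = s n - \<Union>F" "\<forall>f\<in>F'. f \<subseteq> s n"
    using lemA[OF ci F(1) F(2) sn] by (elim exE conjE) (rule that; assumption)
  show ?case
  proof (intro exI[of _ "F \<union> F'"] conjI)
    show "finite (F \<union> F')" using F F' by auto
    show "F \<union> F' \<subseteq> S" using F F' by auto
    show "\<Union>(F \<union> F') = (\<Union>i<Suc n. s i)"
    proof -
      have "\<Union>(F \<union> F') = \<Union>F \<union> \<Union>F'" by (rule Union_Un_distrib)
      also have "\<dots> = (\<Union>i<n. s i) \<union> s n" using F(4) F'(4) by blast
      also have "\<dots> = (\<Union>i<Suc n. s i)" by (simp add: lessThan_Suc Un_commute)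
      finally show ?thesis .
    qed
    show "\<forall>f\<in>F \<union> F'. \<exists>i<Suc n. f \<subseteq> s i"
    proof
      fix f assume "f \<in> F \<union> F'"
      then show "\<exists>i<Suc n. f \<subseteq> s i"
      proof
        assume "f \<in> F" then obtain i where "i < n" "f \<subseteq> s i" using F(5) by blast
        then show ?thesis by (intro exI[of _ i]) simp
      next
        assume "f \<in> F'" then have "f \<subseteq> s n" using F'(5) by blast
        then show ?thesis by (intro exI[of _ n]) simp
      qed
    qed
    show "disjoint (F \<union> F')"
    proof (rule disjointI)
      fix a b assume a: "a \<in> F \<union> F'" and b: "b \<in> F \<union> F'" and ne: "a \<noteq> b"
      show "a \<inter> b = {}"
      proof -
        { assume "a \<in> F" "b \<in> F" then have ?thesis using F(3) ne by (auto dest: disjointD) }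
        moreover { assume "a \<in> F'" "b \<in> F'" then have ?thesis using F'(3) ne by (auto dest: disjointD) }
        moreover { assume "a \<in> F" "b \<in> F'" 
          then have "a \<subseteq> \<Union>F" "b \<subseteq> \<Union>F'" by (simp_all add: Union_upper)
          then have ?thesis using F'(4) by blast }
        moreover { assume "a \<in> F'" "b \<in> F"
          then have "a \<subseteq> \<Union>F'" "b \<subseteq> \<Union>F" by (simp_all add: Union_upper)
          then have ?thesis using F'(4) by blast }
        ultimately show ?thesis using a b by blast
      qed
    qed
  qed
qed

theorem lemma1p3:
  fixes \<Gamma> :: "'a set" and S :: "'a set set" and s :: "nat \<Rightarrow> 'a set" and n :: nat
  assumes "countably_intersected \<Gamma> S"
    and "\<forall>i<n. s i \<in> S"
  shows "\<exists>(l::nat) (t::nat \<Rightarrow> 'a set).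
           (\<forall>j<l. t j \<in> S) \<and> disjoint_family_on t {..<l} \<and>
           (\<forall>j<l. \<exists>i<n. t j \<subseteq> s i) \<and>
           (\<Union>i<n. s i) = (\<Union>j<l. t j)"
proof -
  obtain F where F: "finite F" "F \<subseteq> S" "disjoint F" "\<Union>F = (\<Union>i<n. s i)" "\<forall>f\<in>F. \<exists>i<n. f \<subseteq> s i"
    using lemB[OF assms(1) assms(2)] by (elim exE conjE) (rule that; assumption)
  obtain h where h: "bij_betw h {0..<card F} F" using ex_bij_betw_nat_finite[OF F(1)] by (elim exE) (rule that)
  have img: "h ` {..<card F} = F" using h by (simp add: bij_betw_def atLeast0LessThan)
  have inj: "inj_on h {..<card F}" using h by (simp add: bij_betw_def atLeast0LessThan)
  show ?thesis
  proof (intro exI[of _ "card F"] exI[of _ h] conjI)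
    show "\<forall>j<card F. h j \<in> S" using img F(2) by auto
    show "\<forall>j<card F. \<exists>i<n. h j \<subseteq> s i" using img F(5) by auto
    show "(\<Union>i<n. s i) = (\<Union>j<card F. h j)" using img F(4) by auto
    show "disjoint_family_on h {..<card F}"
      unfolding disjoint_family_on_def
    proof (intro ballI impI)
      fix i j assume "i \<in> {..<card F}" "j \<in> {..<card F}" "i \<noteq> j"
      then have "h i \<noteq> h j" "h i \<in> F" "h j \<in> F" using inj img by (auto simp: inj_on_eq_iff)
      then show "h i \<inter> h j = {}" using F(3) by (intro disjointD[OF F(3)])
    qed
  qed
qed

end
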